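(* For every $n\geqslant 2$, $|\mathcal{AO}_n|=\binom{2n}{n}-\left\lfloor\frac{1}{2}n^2\right\rfloor$.
   Context: Let $\Omega_n=\{1<2<\cdots<n\}$. $\mathcal{I}_n$ denotes the symmetric inverse monoid of all partial injective maps of $\Omega_n$. $\mathcal{AI}_n$ is the set of all $\alpha\in\mathcal{I}_n$ such that $\alpha=\sigma|_{\mathrm{Dom}(\alpha)}$ for some even permutation $\sigma$ of $\Omega_n$. $\mathcal{POI}_n$ is the set of order-preserving elements of $\mathcal{I}_n$, and $\mathcal{AO}_n=\mathcal{AI}_n\cap\mathcal{POI}_n$. *)

theory Defs
  imports Complex_Main "HOL-Combinatorics.Permutations"
begin

definition partial_injections :: "nat \<Rightarrow> (nat \<rightharpoonup> nat) set"  ("\<I>") where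
  "partial_injections n = {\<alpha>. dom \<alpha> \<subseteq> {1..n} \<and> ran \<alpha> \<subseteq> {1..n} \<and> inj_on \<alpha> (dom \<alpha>)}"

definition AI :: "nat \<Rightarrow> (nat \<rightharpoonup> nat) set" where
  "AI n = {\<alpha> \<in> partial_injections n. \<exists>\<sigma>. \<sigma> permutes {1..n} \<and> evenperm \<sigma> \<and>
            (\<forall>x\<in>dom \<alpha>. \<alpha> x = Some (\<sigma> x))}"

definition POI :: "nat \<Rightarrow> (nat \<rightharpoonup> nat) set" where
  "POI n = {\<alpha> \<in> partial_injections n. \<forall>x\<in>dom \<alpha>. \<forall>y\<in>dom \<alpha>. x \<le> y \<longrightarrow> the (\<alpha> x) \<le> the (\<alpha> y)}"

definition AO :: "nat \<Rightarrow> (nat \<rightharpoonup> nat) set" where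
  "AO n = AI n \<inter> POI n"

end

theory Submission
  imports Defs
begin


definition cyc :: "nat \<Rightarrow> nat \<Rightarrow> nat \<Rightarrow> nat" where
  "cyc i j x = (if i \<le> j then (if x < i then x else if x = i then j else if x \<le> j then x - 1 else x)
                else (if x < j then x else if x < i then x + 1 else if x = i then j else x))"

lemma cyc_same: "cyc i i = id"
  by (auto simp: fun_eq_iff cyc_def)

lemma cyc_up: "i < j \<Longrightarrow> cyc i j = transpose (j - 1) j \<circ> cyc i (j - 1)"
  by (auto simp: fun_eq_iff cyc_def transpose_def)

lemma cyc_down: "j < i \<Longrightarrow> cyc i j = transpose j (j + 1) \<circ> cyc i (j + 1)"
  by (auto simp: fun_eq_iff cyc_def transpose_def)

lemma cyc_parity_up: "permutation (cyc i (i + d)) \<and> (evenperm (cyc i (i + d)) \<longleftrightarrow> even d)"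
proof (induction d)
  case 0 thus ?case by (simp add: cyc_same)
next
  case (Suc d)
  have e: "cyc i (i + Suc d) = transpose (i + d) (i + Suc d) \<circ> cyc i (i + d)"
    using cyc_up[of i "i + Suc d"] by simp
  have p: "permutation (cyc i (i + d))" using Suc by blast
  have "permutation (transpose (i + d) (i + Suc d) \<circ> cyc i (i + d)) \<and> (evenperm (transpose (i + d) (i + Suc d) \<circ> cyc i (i + d)) \<longleftrightarrow> even (Suc d))"
    using Suc evenperm_comp[OF permutation_swap_id p, of "i+d" "i + Suc d"]
     permutation_compose[OF permutation_swap_id p] evenperm_swap[of "i+d" "i + Suc d"] by auto
  then show ?case by (simp only: e)
qed

lemma cyc_parity_down: "permutation (cyc (j + d) j) \<and> (evenperm (cyc (j + d) j) \<longleftrightarrow> even d)"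
proof (induction d arbitrary: j)
  case 0 thus ?case by (simp add: cyc_same)
next
  case (Suc d)
  have e: "cyc (j + Suc d) j = transpose j (j + 1) \<circ> cyc (Suc j + d) (j + 1)"
    using cyc_down[of j "j + Suc d"] by simp
  have p: "permutation (cyc (Suc j + d) (j + 1))" using Suc[of "Suc j"] by simp
  have "permutation (transpose j (j + 1) \<circ> cyc (Suc j + d) (j + 1)) \<and> (evenperm (transpose j (j + 1) \<circ> cyc (Suc j + d) (j + 1)) \<longleftrightarrow> even (Suc d))"
    using Suc[of "Suc j"] evenperm_comp[OF permutation_swap_id p, of j "j+1"]
     permutation_compose[OF permutation_swap_id p] evenperm_swap[of j "j+1"] by auto
  then show ?case by (simp only: e)
qed

lemma cyc_parity: "permutation (cyc i j) \<and> (evenperm (cyc i j) \<longleftrightarrow> even (i + j))"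
proof (cases "i \<le> j")
  case True
  then obtain d where "j = i + d" using le_Suc_ex by blast
  thus ?thesis using cyc_parity_up[of i d] by auto
next
  case False
  then obtain d where "i = j + d" by (metis le_Suc_ex nat_le_linear)
  thus ?thesis using cyc_parity_down[of j d] by auto
qed

lemma cyc_permutes:
  assumes "i \<in> {1..n}" "j \<in> {1..n}"
  shows "cyc i j permutes {1..n}"
proof -
  have "bij (cyc i j)" using cyc_parity permutation_bijective by blast
  moreover have "\<forall>x. x \<notin> {1..n} \<longrightarrow> cyc i j x = x" using assms by (auto simp: cyc_def)
  ultimately show ?thesis unfolding permutes_def by (metis bij_pointE)
qed




lemma count_below:
  fixes f :: "nat \<Rightarrow> nat"
  assumes "inj_on f A" "\<forall>x\<in>A. \<forall>y\<in>A. x \<le> y \<longrightarrow> f x \<le> f y" "x \<in> A"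
  shows "card {b \<in> f ` A. b < f x} = card {a \<in> A. a < x}"
proof -
  have "f ` {a \<in> A. a < x} = {b \<in> f ` A. b < f x}"
  proof
    show "f ` {a \<in> A. a < x} \<subseteq> {b \<in> f ` A. b < f x}"
    proof
      fix b assume "b \<in> f ` {a \<in> A. a < x}"
      then obtain a where a: "a \<in> A" "a < x" "b = f a" by auto
      have "f a \<le> f x" using assms a by auto
      moreover have "f a \<noteq> f x" using assms(1,3) a by (metis inj_on_eq_iff less_irrefl)
      ultimately show "b \<in> {b \<in> f ` A. b < f x}" using a by auto
    qed
  next
    show "{b \<in> f ` A. b < f x} \<subseteq> f ` {a \<in> A. a < x}"
    proof
      fix b assume "b \<in> {b \<in> f ` A. b < f x}"
      then obtain a where a: "a \<in> A" "b = f a" "f a < f x" by auto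
      have "a < x"
      proof (rule ccontr)
        assume "\<not> a < x" then have "x \<le> a" by simp
        then have "f x \<le> f a" using assms a by auto
        then show False using a by simp
      qed
      then show "b \<in> f ` {a \<in> A. a < x}" using a by auto
    qed
  qed
  moreover have "inj_on f {a \<in> A. a < x}" using assms(1) by (rule inj_on_subset) auto
  ultimately show ?thesis by (metis card_image)
qed

lemma mono_bij_unique:
  fixes f g :: "nat \<Rightarrow> nat"
  assumes fin: "finite A" and inj: "inj_on f A" "inj_on g A" and im: "f ` A = g ` A"
    and mf: "\<forall>x\<in>A. \<forall>y\<in>A. x \<le> y \<longrightarrow> f x \<le> f y"
    and mg: "\<forall>x\<in>A. \<forall>y\<in>A. x \<le> y \<longrightarrow> g x \<le> g y" and x: "x \<in> A"
  shows "f x = g x"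
proof -
  let ?B = "f ` A"
  have c1: "card {b \<in> ?B. b < f x} = card {a \<in> A. a < x}" using count_below[OF inj(1) mf x] .
  have c2: "card {b \<in> ?B. b < g x} = card {a \<in> A. a < x}" using count_below[OF inj(2) mg x] im by simp
  have fB: "finite ?B" using fin by simp
  have "\<not> f x < g x"
  proof
    assume lt: "f x < g x"
    have "{b \<in> ?B. b < f x} \<subset> {b \<in> ?B. b < g x}" using lt x by auto
    then have "card {b \<in> ?B. b < f x} < card {b \<in> ?B. b < g x}"
      by (rule psubset_card_mono[rotated]) (use fB in simp)
    then show False using c1 c2 by simp
  qed
  moreover have "\<not> g x < f x"
  proof
    assume lt: "g x < f x"
    have "{b \<in> ?B. b < g x} \<subset> {b \<in> ?B. b < f x}" using lt x im by auto
    then have "card {b \<in> ?B. b < g x} < card {b \<in> ?B. b < f x}"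
      by (rule psubset_card_mono[rotated]) (use fB in simp)
    then show False using c1 c2 by simp
  qed
  ultimately show ?thesis by simp
qed

lemma ran_the: "ran \<alpha> = (\<lambda>x. the (\<alpha> x)) ` dom \<alpha>"
  by (force simp: ran_def dom_def)

lemma inj_the: "inj_on \<alpha> (dom \<alpha>) \<Longrightarrow> inj_on (\<lambda>x. the (\<alpha> x)) (dom \<alpha>)"
  by (auto simp: inj_on_def dom_def)

lemma card_dom_ran: "inj_on \<alpha> (dom \<alpha>) \<Longrightarrow> card (ran \<alpha>) = card (dom \<alpha>)"
  by (simp add: ran_the card_image inj_the)

lemma POI_unique:
  assumes "\<alpha> \<in> POI n" "\<beta> \<in> POI n" "dom \<alpha> = dom \<beta>" "ran \<alpha> = ran \<beta>"
  shows "\<alpha> = \<beta>"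
proof
  fix x
  show "\<alpha> x = \<beta> x"
  proof (cases "x \<in> dom \<alpha>")
    case False then show ?thesis using assms(3) by (metis domIff)
  next
    case True
    have fin: "finite (dom \<alpha>)" using assms(1) unfolding POI_def partial_injections_def
      by (metis (no_types, lifting) finite_atLeastAtMost finite_subset mem_Collect_eq)
    have "the (\<alpha> x) = the (\<beta> x)"
    proof (rule mono_bij_unique[OF fin, where f="\<lambda>x. the (\<alpha> x)" and g="\<lambda>x. the (\<beta> x)"])
      have ia: "inj_on \<alpha> (dom \<alpha>)" "inj_on \<beta> (dom \<beta>)" using assms(1,2) by (auto simp: POI_def partial_injections_def)
      show "inj_on (\<lambda>x. the (\<alpha> x)) (dom \<alpha>)" using inj_the[OF ia(1)] .
      show "inj_on (\<lambda>x. the (\<beta> x)) (dom \<alpha>)" using inj_the[OF ia(2)] assms(3) by simp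
      show "(\<lambda>x. the (\<alpha> x)) ` dom \<alpha> = (\<lambda>x. the (\<beta> x)) ` dom \<alpha>"
        using ran_the[of \<alpha>] ran_the[of \<beta>] assms(3,4) by simp
    qed (use assms True in \<open>auto simp: POI_def\<close>)
    then show ?thesis using True assms(3) by (metis domIff option.expand)
  qed
qed

lemma POI_exists:
  assumes "A \<subseteq> {1..n}" "B \<subseteq> {1..n}" "card A = card B"
  shows "\<exists>\<alpha>\<in>POI n. dom \<alpha> = A \<and> ran \<alpha> = B"
proof -
  have fA: "finite A" "finite B" using assms finite_subset by auto
  define xs where "xs = sorted_list_of_set A"
  define ys where "ys = sorted_list_of_set B"
  have len: "length xs = length ys" using assms fA by (simp add: xs_def ys_def)
  have dx: "distinct xs" "distinct ys" by (simp_all add: xs_def ys_def)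
  have sx: "sorted_wrt (<) xs" "sorted ys" by (simp_all add: xs_def ys_def strict_sorted_list_of_set)
  have setx: "set xs = A" "set ys = B" using fA by (simp_all add: xs_def ys_def)
  define \<alpha> where "\<alpha> = map_of (zip xs ys)"
  have dom: "dom \<alpha> = A" using len setx by (simp add: \<alpha>_def)
  have ran: "ran \<alpha> = B" using len dx setx by (simp add: \<alpha>_def ran_map_of_zip)
  have nth: "\<alpha> (xs ! i) = Some (ys ! i)" if "i < length xs" for i
    using map_of_zip_nth[OF len dx(1)] that len by (simp add: \<alpha>_def)
  have inj: "inj_on \<alpha> (dom \<alpha>)"
  proof (rule inj_onI)
    fix x y assume "x \<in> dom \<alpha>" "y \<in> dom \<alpha>" "\<alpha> x = \<alpha> y"
    then obtain i k where "i < length xs" "k < length xs" "x = xs ! i" "y = xs ! k"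
      using dom setx by (metis in_set_conv_nth)
    then show "x = y" using \<open>\<alpha> x = \<alpha> y\<close> nth dx len by (simp add: nth_eq_iff_index_eq)
  qed
  have mono: "\<forall>x\<in>dom \<alpha>. \<forall>y\<in>dom \<alpha>. x \<le> y \<longrightarrow> the (\<alpha> x) \<le> the (\<alpha> y)"
  proof (intro ballI impI)
    fix x y assume "x \<in> dom \<alpha>" "y \<in> dom \<alpha>" "x \<le> y"
    then obtain i k where ik: "i < length xs" "k < length xs" "x = xs ! i" "y = xs ! k"
      using dom setx by (metis in_set_conv_nth)
    have "i \<le> k"
    proof (rule ccontr)
      assume "\<not> i \<le> k"
      then have "xs ! k < xs ! i" using sorted_wrt_nth_less[OF sx(1)] ik by simp
      then show False using ik \<open>x \<le> y\<close> by simp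
    qed
    then show "the (\<alpha> x) \<le> the (\<alpha> y)" using ik nth sorted_nth_mono[OF sx(2)] len by simp
  qed
  have "\<alpha> \<in> POI n" using dom ran inj mono assms unfolding POI_def partial_injections_def by auto
  then show ?thesis using dom ran by blast
qed




lemma extend_perm:
  assumes "\<alpha> \<in> \<I> n"
  shows "\<exists>\<sigma>. \<sigma> permutes {1..n} \<and> (\<forall>x\<in>dom \<alpha>. \<alpha> x = Some (\<sigma> x))"
proof -
  let ?O = "{1..n::nat}"
  have D: "dom \<alpha> \<subseteq> ?O" and R: "ran \<alpha> \<subseteq> ?O" and inj: "inj_on \<alpha> (dom \<alpha>)"
    using assms by (auto simp: partial_injections_def)
  have fD: "finite (dom \<alpha>)" "finite (ran \<alpha>)" using D R by (meson finite_atLeastAtMost finite_subset)+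
  have "card (?O - dom \<alpha>) = card (?O - ran \<alpha>)"
    using D R fD by (simp add: card_Diff_subset card_dom_ran[OF inj])
  then obtain h where h: "bij_betw h (?O - dom \<alpha>) (?O - ran \<alpha>)"
    using finite_same_card_bij by blast
  define \<sigma> where "\<sigma> x = (if x \<in> dom \<alpha> then the (\<alpha> x) else if x \<in> ?O then h x else x)" for x
  have sub: "\<sigma> ` ?O \<subseteq> ?O"
  proof
    fix y assume "y \<in> \<sigma> ` ?O"
    then obtain x where x: "x \<in> ?O" "y = \<sigma> x" by auto
    show "y \<in> ?O"
    proof (cases "x \<in> dom \<alpha>")
      case True
      then have "the (\<alpha> x) \<in> ran \<alpha>" by (auto simp: ran_def dom_def)
      then show ?thesis using True x R by (auto simp: \<sigma>_def)
    next
      case False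
      then have "h x \<in> ?O - ran \<alpha>" using h x bij_betwE by blast
      then show ?thesis using False x by (auto simp: \<sigma>_def)
    qed
  qed
  have sup: "?O \<subseteq> \<sigma> ` ?O"
  proof
    fix y assume y: "y \<in> ?O"
    show "y \<in> \<sigma> ` ?O"
    proof (cases "y \<in> ran \<alpha>")
      case True
      then obtain x where "\<alpha> x = Some y" by (auto simp: ran_def)
      then have "x \<in> dom \<alpha>" "\<sigma> x = y" by (auto simp: \<sigma>_def)
      then show ?thesis using D by force
    next
      case False
      then have "y \<in> h ` (?O - dom \<alpha>)" using h y by (simp add: bij_betw_def)
      then obtain x where "x \<in> ?O - dom \<alpha>" "y = h x" by blast
      then have "x \<in> ?O" "\<sigma> x = y" by (auto simp: \<sigma>_def)
      then show ?thesis by force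
    qed
  qed
  have "inj_on \<sigma> ?O" using finite_surj_inj[OF _ sup] by simp
  then have "bij_betw \<sigma> ?O ?O" using sub sup by (auto simp: bij_betw_def)
  moreover have "\<And>x. x \<notin> ?O \<Longrightarrow> \<sigma> x = x" using D by (auto simp: \<sigma>_def)
  ultimately have "\<sigma> permutes ?O" by (rule bij_imp_permutes)
  moreover have "\<forall>x\<in>dom \<alpha>. \<alpha> x = Some (\<sigma> x)" by (auto simp: \<sigma>_def)
  ultimately show ?thesis by blast
qed

lemma AI_two_free:
  assumes "\<alpha> \<in> \<I> n" "a \<noteq> b" "a \<in> {1..n} - dom \<alpha>" "b \<in> {1..n} - dom \<alpha>"
  shows "\<alpha> \<in> AI n"
proof -
  obtain \<sigma> where s: "\<sigma> permutes {1..n}" "\<forall>x\<in>dom \<alpha>. \<alpha> x = Some (\<sigma> x)"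
    using extend_perm[OF assms(1)] by blast
  show ?thesis
  proof (cases "evenperm \<sigma>")
    case True then show ?thesis using assms s by (auto simp: AI_def)
  next
    case False
    let ?t = "\<sigma> \<circ> transpose a b"
    have p: "?t permutes {1..n}" using permutes_compose[OF permutes_swap_id s(1)] assms by auto
    have "evenperm ?t" using evenperm_comp[OF permutes_imp_permutation[OF _ s(1)] permutation_swap_id, of a b]
      False assms(2) evenperm_swap[of a b] by simp
    moreover have "\<forall>x\<in>dom \<alpha>. \<alpha> x = Some (?t x)" using s(2) assms(3,4) by (auto simp: transpose_def)
    ultimately show ?thesis using p assms(1) by (auto simp: AI_def)
  qed
qed

lemma AI_full:
  assumes "\<alpha> \<in> POI n" "dom \<alpha> = {1..n}"
  shows "\<alpha> \<in> AI n"
proof -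
  define \<iota> where "\<iota> x = (if x \<in> {1..n} then Some x else None)" for x
  have di: "dom \<iota> = {1..n}" by (auto simp add: \<iota>_def dom_def)
  have ri: "ran \<iota> = {1..n}" unfolding ran_def \<iota>_def by force
  have ii: "inj_on \<iota> (dom \<iota>)" unfolding inj_on_def di \<iota>_def by simp
  have mi: "\<forall>x\<in>dom \<iota>. \<forall>y\<in>dom \<iota>. x \<le> y \<longrightarrow> the (\<iota> x) \<le> the (\<iota> y)"
    unfolding di \<iota>_def by simp
  have iP: "\<iota> \<in> POI n" using di ri ii mi unfolding POI_def partial_injections_def by blast
  have inj: "inj_on \<alpha> (dom \<alpha>)" "ran \<alpha> \<subseteq> {1..n}" "\<alpha> \<in> \<I> n"
    using assms(1) unfolding POI_def partial_injections_def by blast+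
  have "ran \<alpha> = {1..n}"
    using card_subset_eq[OF _ inj(2)] card_dom_ran[OF inj(1)] assms(2) by simp
  then have ae: "\<alpha> = \<iota>" using POI_unique[OF assms(1) iP] assms(2) di ri by simp
  have "\<forall>x\<in>dom \<alpha>. \<alpha> x = Some (id x)" unfolding ae di by (simp add: \<iota>_def)
  then show ?thesis using inj(3) permutes_id evenperm_id unfolding AI_def by blast
qed

lemma cyc_mono:
  assumes "x \<noteq> i" "y \<noteq> i" "x \<le> y"
  shows "cyc i j x \<le> cyc i j y"
  using assms unfolding cyc_def apply (simp split: if_split) by arith

lemma cyc_i: "cyc i j i = j" by (auto simp: cyc_def)

lemma AI_n1:
  assumes "\<alpha> \<in> POI n" "i \<in> {1..n}" "dom \<alpha> = {1..n} - {i}"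
  shows "\<exists>j\<in>{1..n}. ran \<alpha> = {1..n} - {j} \<and> (\<alpha> \<in> AI n \<longleftrightarrow> even (i + j))"
proof -
  let ?O = "{1..n::nat}"
  have inj: "inj_on \<alpha> (dom \<alpha>)" and R: "ran \<alpha> \<subseteq> ?O" using assms(1) by (auto simp: POI_def partial_injections_def)
  have "card (ran \<alpha>) = n - 1" using card_dom_ran[OF inj] assms(2,3) by simp
  then have "card (?O - ran \<alpha>) = 1" using R assms(2) by (simp add: card_Diff_subset finite_subset)
  then obtain j where j: "?O - ran \<alpha> = {j}" using card_1_singletonE by blast
  then have jO: "j \<in> ?O" and ranj: "ran \<alpha> = ?O - {j}" using R by auto
  have cp: "cyc i j permutes ?O" using cyc_permutes assms(2) jO by blast
  have img: "cyc i j ` (?O - {i}) = ?O - {j}"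
  proof -
    have "cyc i j ` (?O - {i}) = cyc i j ` ?O - {cyc i j i}"
      using permutes_inj[OF cp] by (simp add: image_set_diff)
    also have "\<dots> = ?O - {j}" using permutes_image[OF cp] cyc_i by simp
    finally show ?thesis .
  qed
  define \<gamma> where "\<gamma> x = (if x \<in> ?O - {i} then Some (cyc i j x) else None)" for x
  have dg: "dom \<gamma> = ?O - {i}" by (auto simp: \<gamma>_def dom_def)
  have gv: "\<gamma> x = Some (cyc i j x)" if "x \<in> ?O - {i}" for x using that by (simp add: \<gamma>_def)
  have rg: "ran \<gamma> = ?O - {j}"
  proof -
    have "ran \<gamma> = (\<lambda>x. the (\<gamma> x)) ` (?O - {i})" using ran_the[of \<gamma>] dg by simp
    also have "\<dots> = cyc i j ` (?O - {i})" using gv by (intro image_cong) auto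
    finally show ?thesis using img by simp
  qed
  have gP: "\<gamma> \<in> POI n"
  proof -
    have "inj_on \<gamma> (dom \<gamma>)"
    proof (rule inj_onI)
      fix x y assume "x \<in> dom \<gamma>" "y \<in> dom \<gamma>" "\<gamma> x = \<gamma> y"
      then have "x \<in> ?O" "y \<in> ?O" "cyc i j x = cyc i j y" using gv dg by auto
      then show "x = y" using permutes_inj[OF cp] by (meson injD)
    qed
    moreover have "\<forall>x\<in>dom \<gamma>. \<forall>y\<in>dom \<gamma>. x \<le> y \<longrightarrow> the (\<gamma> x) \<le> the (\<gamma> y)"
    proof (intro ballI impI)
      fix x y assume "x \<in> dom \<gamma>" "y \<in> dom \<gamma>" "x \<le> y"
      then show "the (\<gamma> x) \<le> the (\<gamma> y)" using gv dg cyc_mono[of x i y j] by simp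
    qed
    moreover have "dom \<gamma> \<subseteq> ?O" "ran \<gamma> \<subseteq> ?O" using dg rg by auto
    ultimately show ?thesis unfolding POI_def partial_injections_def by blast
  qed
  have aeq: "\<alpha> = \<gamma>" using POI_unique[OF assms(1) gP] dg rg assms(3) ranj by simp
  have aI: "\<alpha> \<in> \<I> n" using assms(1) unfolding POI_def by blast
  have av: "\<alpha> x = Some (cyc i j x)" if "x \<in> dom \<alpha>" for x using that assms(3) aeq gv by simp
  have "\<alpha> \<in> AI n \<longleftrightarrow> even (i + j)"
  proof
    assume "even (i + j)"
    then have "evenperm (cyc i j)" using cyc_parity by blast
    then show "\<alpha> \<in> AI n" using cp aI av unfolding AI_def by blast
  next
    assume "\<alpha> \<in> AI n"
    then obtain \<sigma> where s: "\<sigma> permutes ?O" "evenperm \<sigma>" "\<forall>x\<in>dom \<alpha>. \<alpha> x = Some (\<sigma> x)"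
      unfolding AI_def by blast
    have agree: "\<sigma> x = cyc i j x" if "x \<in> ?O - {i}" for x
      using s(3) that assms(3) av by force
    have "\<sigma> ` (?O - {i}) = cyc i j ` (?O - {i})" using agree by (rule image_cong[OF refl])
    then have e1: "\<sigma> ` (?O - {i}) = ?O - {j}" using img by simp
    have e2: "\<sigma> ` (?O - {i}) = \<sigma> ` ?O - {\<sigma> i}"
      using permutes_inj[OF s(1)] by (simp add: image_set_diff)
    have e3: "\<sigma> ` ?O = ?O" using permutes_image[OF s(1)] .
    have e4: "\<sigma> i \<in> ?O" using permutes_in_image[OF s(1)] assms(2) by simp
    have si: "\<sigma> i = j"
    proof (rule ccontr)
      assume "\<sigma> i \<noteq> j"
      then have "\<sigma> i \<in> ?O - {j}" using e4 by simp
      then show False using e1 e2 by blast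
    qed
    have "\<sigma> = cyc i j"
    proof
      fix x
      show "\<sigma> x = cyc i j x"
      proof (cases "x \<in> ?O")
        case True
        then show ?thesis using agree si cyc_i by (cases "x = i") auto
      next
        case False
        then show ?thesis using permutes_not_in[OF s(1)] permutes_not_in[OF cp] by metis
      qed
    qed
    then show "even (i + j)" using s(2) cyc_parity by blast
  qed
  then show ?thesis using jO ranj by blast
qed




definition PP :: "nat \<Rightarrow> (nat set \<times> nat set) set" where
  "PP n = {(A, B). A \<subseteq> {1..n} \<and> B \<subseteq> {1..n} \<and> card A = card B}"

definition QQ :: "nat \<Rightarrow> (nat \<times> nat) set" where
  "QQ n = {(i, j). i \<in> {1..n} \<and> j \<in> {1..n} \<and> odd (i + j)}"

definition Bad :: "nat \<Rightarrow> (nat set \<times> nat set) set" where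
  "Bad n = (\<lambda>(i, j). ({1..n} - {i}, {1..n} - {j})) ` QQ n"

lemma remove_inj: "i \<in> {1..n::nat} \<Longrightarrow> i' \<in> {1..n} \<Longrightarrow> {1..n} - {i} = {1..n} - {i'} \<Longrightarrow> i = i'"
  by blast

lemma charAO:
  assumes "\<alpha> \<in> POI n"
  shows "\<alpha> \<in> AO n \<longleftrightarrow> (dom \<alpha>, ran \<alpha>) \<notin> Bad n"
proof -
  let ?O = "{1..n::nat}"
  have D: "dom \<alpha> \<subseteq> ?O" and aI: "\<alpha> \<in> \<I> n" using assms unfolding POI_def partial_injections_def by blast+
  have fin: "finite (?O - dom \<alpha>)" by simp
  have notbad1: "(dom \<alpha>, ran \<alpha>) \<notin> Bad n" if "\<forall>i\<in>?O. dom \<alpha> \<noteq> ?O - {i}"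
    using that unfolding Bad_def QQ_def by force
  consider "card (?O - dom \<alpha>) = 0" | "card (?O - dom \<alpha>) = 1" | "card (?O - dom \<alpha>) \<ge> 2" by linarith
  then show ?thesis
  proof cases
    case 1
    then have dO: "dom \<alpha> = ?O" using D fin by auto
    have "\<alpha> \<in> AI n" using AI_full[OF assms dO] .
    moreover have "\<forall>i\<in>?O. dom \<alpha> \<noteq> ?O - {i}" using dO by auto
    ultimately show ?thesis using notbad1 assms by (simp add: AO_def)
  next
    case 2
    then obtain i where i: "?O - dom \<alpha> = {i}" using card_1_singletonE by blast
    then have iO: "i \<in> ?O" and di: "dom \<alpha> = ?O - {i}" using D by auto
    obtain j where j: "j \<in> ?O" "ran \<alpha> = ?O - {j}" "\<alpha> \<in> AI n \<longleftrightarrow> even (i + j)"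
      using AI_n1[OF assms iO di] by blast
    have "(dom \<alpha>, ran \<alpha>) \<in> Bad n \<longleftrightarrow> odd (i + j)"
    proof
      assume "(dom \<alpha>, ran \<alpha>) \<in> Bad n"
      then obtain i' j' where "i' \<in> ?O" "j' \<in> ?O" "odd (i' + j')"
        "?O - {i} = ?O - {i'}" "?O - {j} = ?O - {j'}"
        using di j unfolding Bad_def QQ_def by auto
      then show "odd (i + j)" using remove_inj iO j(1) by metis
    next
      assume "odd (i + j)"
      then show "(dom \<alpha>, ran \<alpha>) \<in> Bad n" using di j iO unfolding Bad_def QQ_def by auto
    qed
    then show ?thesis using j(3) assms by (auto simp: AO_def)
  next
    case 3
    then have "\<not> card (?O - dom \<alpha>) \<le> Suc 0" by simp
    then obtain a b where ab: "a \<in> ?O - dom \<alpha>" "b \<in> ?O - dom \<alpha>" "a \<noteq> b"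
      using card_le_Suc0_iff_eq[OF fin] by blast
    have "\<alpha> \<in> AI n" using AI_two_free[OF aI ab(3) ab(1,2)] .
    moreover have "\<forall>i\<in>?O. dom \<alpha> \<noteq> ?O - {i}"
    proof (intro ballI notI)
      fix i assume "i \<in> ?O" "dom \<alpha> = ?O - {i}"
      then have "?O - dom \<alpha> = {i}" by auto
      then show False using 3 by simp
    qed
    ultimately show ?thesis using notbad1 assms by (simp add: AO_def)
  qed
qed

lemma Phi_bij: "bij_betw (\<lambda>\<alpha>. (dom \<alpha>, ran \<alpha>)) (POI n) (PP n)"
proof -
  have "inj_on (\<lambda>\<alpha>. (dom \<alpha>, ran \<alpha>)) (POI n)"
  proof (rule inj_onI)
    fix x y assume "x \<in> POI n" "y \<in> POI n" "(dom x, ran x) = (dom y, ran y)"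
    then show "x = y" using POI_unique[of x n y] by simp
  qed
  moreover have "(\<lambda>\<alpha>. (dom \<alpha>, ran \<alpha>)) ` POI n = PP n"
  proof
    show "(\<lambda>\<alpha>. (dom \<alpha>, ran \<alpha>)) ` POI n \<subseteq> PP n"
    proof
      fix p assume "p \<in> (\<lambda>\<alpha>. (dom \<alpha>, ran \<alpha>)) ` POI n"
      then obtain \<alpha> where a: "\<alpha> \<in> POI n" "p = (dom \<alpha>, ran \<alpha>)" by blast
      then have "dom \<alpha> \<subseteq> {1..n}" "ran \<alpha> \<subseteq> {1..n}" "inj_on \<alpha> (dom \<alpha>)"
        unfolding POI_def partial_injections_def by blast+
      then show "p \<in> PP n" using a(2) card_dom_ran[of \<alpha>] unfolding PP_def by simp
    qed
  next
    show "PP n \<subseteq> (\<lambda>\<alpha>. (dom \<alpha>, ran \<alpha>)) ` POI n"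
    proof
      fix p assume "p \<in> PP n"
      then obtain A B where "p = (A, B)" "A \<subseteq> {1..n}" "B \<subseteq> {1..n}" "card A = card B"
        unfolding PP_def by blast
      then obtain \<alpha> where "\<alpha> \<in> POI n" "dom \<alpha> = A" "ran \<alpha> = B" using POI_exists[of A n B] by blast
      then show "p \<in> (\<lambda>\<alpha>. (dom \<alpha>, ran \<alpha>)) ` POI n" using \<open>p = (A, B)\<close> by force
    qed
  qed
  ultimately show ?thesis unfolding bij_betw_def by blast
qed

lemma card_PP: "card (PP n) = (2 * n) choose n"
proof -
  let ?O = "{1..n::nat}"
  define S where "S k = {A. A \<subseteq> ?O \<and> card A = k}" for k
  have eq: "PP n = (\<Union>k\<in>{..n}. S k \<times> S k)"
  proof
    show "PP n \<subseteq> (\<Union>k\<in>{..n}. S k \<times> S k)"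
    proof
      fix p assume "p \<in> PP n"
      then obtain A B where "p = (A, B)" "A \<subseteq> ?O" "B \<subseteq> ?O" "card A = card B"
        unfolding PP_def by blast
      moreover have "card A \<le> n" using card_mono[OF _ \<open>A \<subseteq> ?O\<close>] by simp
      ultimately show "p \<in> (\<Union>k\<in>{..n}. S k \<times> S k)" unfolding S_def by auto
    qed
  next
    show "(\<Union>k\<in>{..n}. S k \<times> S k) \<subseteq> PP n" unfolding S_def PP_def by auto
  qed
  have fS: "finite (S k)" for k
  proof -
    have "S k \<subseteq> Pow ?O" unfolding S_def by auto
    then show ?thesis by (rule finite_subset) simp
  qed
  have cS: "card (S k) = n choose k" for k unfolding S_def using n_subsets[of ?O k] by simp
  have "card (PP n) = (\<Sum>k\<in>{..n}. card (S k \<times> S k))"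
    unfolding eq by (rule card_UN_disjoint) (use fS in \<open>auto simp: S_def\<close>)
  also have "\<dots> = (\<Sum>k\<le>n. (n choose k) ^ 2)" by (simp add: card_cartesian_product cS power2_eq_square)
  also have "\<dots> = (2 * n) choose n" by (rule choose_square_sum)
  finally show ?thesis .
qed

lemma card_evens: "card {i \<in> {1..n::nat}. even i} = n div 2"
proof -
  have "{i \<in> {1..n::nat}. even i} = (\<lambda>k. 2 * k) ` {1..n div 2}"
  proof
    show "{i \<in> {1..n::nat}. even i} \<subseteq> (\<lambda>k. 2 * k) ` {1..n div 2}"
    proof
      fix i assume "i \<in> {i \<in> {1..n::nat}. even i}"
      then have "i = 2 * (i div 2)" "i div 2 \<in> {1..n div 2}" by auto
      then show "i \<in> (\<lambda>k. 2 * k) ` {1..n div 2}" by blast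
    qed
  qed auto
  moreover have "inj_on (\<lambda>k::nat. 2 * k) {1..n div 2}" by (auto simp: inj_on_def)
  ultimately show ?thesis by (simp add: card_image)
qed

lemma card_QQ: "card (QQ n) = n * n div 2"
proof -
  let ?E = "{i \<in> {1..n::nat}. even i}" and ?Od = "{i \<in> {1..n::nat}. odd i}"
  have part: "?E \<union> ?Od = {1..n}" "?E \<inter> ?Od = {}" by auto
  have "card ?E + card ?Od = n"
    using card_Un_disjoint[of ?E ?Od] part by simp
  then have cO: "card ?Od = n - n div 2" using card_evens[of n] by simp
  have qe: "QQ n = ?Od \<times> ?E \<union> ?E \<times> ?Od"
  proof (rule set_eqI)
    fix p :: "nat \<times> nat"
    obtain i j where p: "p = (i, j)" by fastforce
    have "odd (i + j) \<longleftrightarrow> (odd i \<and> even j) \<or> (even i \<and> odd j)" by presburger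
    then show "p \<in> QQ n \<longleftrightarrow> p \<in> ?Od \<times> ?E \<union> ?E \<times> ?Od" unfolding p QQ_def by blast
  qed
  have disj: "(?Od \<times> ?E) \<inter> (?E \<times> ?Od) = {}" by auto
  have "card (QQ n) = card (?Od \<times> ?E) + card (?E \<times> ?Od)"
    unfolding qe by (rule card_Un_disjoint[OF _ _ disj]) auto
  also have "\<dots> = 2 * (n - n div 2) * (n div 2)" using cO card_evens[of n] by (simp add: card_cartesian_product)
  also have "\<dots> = n * n div 2"
  proof (cases "even n")
    case True then obtain m where m: "n = 2 * m" by blast
    have "n * n = 2 * (2 * m * m)" using m by simp
    then have "n * n div 2 = 2 * m * m" by simp
    then show ?thesis using m by simp
  next
    case False then obtain m where m: "n = 2 * m + 1" using oddE by blast
    have "n * n = 2 * (2 * m * m + 2 * m) + 1" using m by (simp add: algebra_simps)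
    then have "n * n div 2 = 2 * m * m + 2 * m" by simp
    moreover have "n div 2 = m" "n - n div 2 = m + 1" using m by simp_all
    ultimately show ?thesis by (simp add: algebra_simps)
  qed
  finally show ?thesis .
qed

lemma Bad_sub: "Bad n \<subseteq> PP n"
  unfolding Bad_def QQ_def PP_def by auto

lemma card_Bad: "card (Bad n) = card (QQ n)"
proof -
  have "inj_on (\<lambda>(i, j). ({1..n} - {i}, {1..n} - {j})) (QQ n)"
  proof (rule inj_onI)
    fix p q assume pq: "p \<in> QQ n" "q \<in> QQ n"
      "(\<lambda>(i, j). ({1..n} - {i}, {1..n} - {j})) p = (\<lambda>(i, j). ({1..n} - {i}, {1..n} - {j})) q"
    obtain i j i' j' where p: "p = (i, j)" and q: "q = (i', j')" by fastforce
    have m: "i \<in> {1..n}" "j \<in> {1..n}" "i' \<in> {1..n}" "j' \<in> {1..n}" using pq(1,2) unfolding p q QQ_def by auto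
    have "{1..n} - {i} = {1..n} - {i'}" "{1..n} - {j} = {1..n} - {j'}" using pq(3) unfolding p q by simp_all
    then show "p = q" unfolding p q using remove_inj m by metis
  qed
  then show ?thesis unfolding Bad_def by (rule card_image)
qed

lemma finite_PP: "finite (PP n)"
proof -
  have "PP n \<subseteq> Pow {1..n} \<times> Pow {1..n}" unfolding PP_def by blast
  then show ?thesis by (rule finite_subset) simp
qed

lemma card_AO: "card (AO n) = ((2 * n) choose n) - n * n div 2"
proof -
  let ?F = "\<lambda>\<alpha>::nat \<rightharpoonup> nat. (dom \<alpha>, ran \<alpha>)"
  have AO_eq: "AO n = {\<alpha> \<in> POI n. ?F \<alpha> \<notin> Bad n}"
  proof (rule set_eqI)
    fix \<alpha>
    show "\<alpha> \<in> AO n \<longleftrightarrow> \<alpha> \<in> {\<alpha> \<in> POI n. ?F \<alpha> \<notin> Bad n}"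
    proof (cases "\<alpha> \<in> POI n")
      case True then show ?thesis using charAO[OF True] by simp
    next
      case False then show ?thesis unfolding AO_def by simp
    qed
  qed
  have bij: "bij_betw ?F (POI n) (PP n)" by (rule Phi_bij)
  have inj: "inj_on ?F (POI n)" and im: "?F ` POI n = PP n" using bij unfolding bij_betw_def by blast+
  have sub: "AO n \<subseteq> POI n" unfolding AO_eq by blast
  have img: "?F ` AO n = PP n - Bad n"
  proof
    show "?F ` AO n \<subseteq> PP n - Bad n" using sub im AO_eq by blast
  next
    show "PP n - Bad n \<subseteq> ?F ` AO n"
    proof
      fix p assume "p \<in> PP n - Bad n"
      then obtain \<alpha> where "\<alpha> \<in> POI n" "p = ?F \<alpha>" "p \<notin> Bad n" using im by blast
      then have "\<alpha> \<in> AO n" "p = ?F \<alpha>" unfolding AO_eq by simp_all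
      then show "p \<in> ?F ` AO n" by blast
    qed
  qed
  have "inj_on ?F (AO n)" using inj sub by (rule inj_on_subset)
  then have "card (AO n) = card (?F ` AO n)" by (rule card_image[symmetric])
  also have "\<dots> = card (PP n - Bad n)" using img by simp
  also have "\<dots> = card (PP n) - card (Bad n)"
  proof (rule card_Diff_subset)
    have "PP n \<subseteq> Pow {1..n} \<times> Pow {1..n}" unfolding PP_def by blast
    then have "finite (PP n)" by (rule finite_subset) simp
    then show "finite (Bad n)" using Bad_sub by (rule finite_subset[rotated])
  qed (rule Bad_sub)
  finally show ?thesis using card_PP card_Bad card_QQ by simp
qed

theorem proposition1p2:
  fixes n :: nat
  assumes "n \<ge> 2"
  shows "int (card (AO n)) = int ((2 * n) choose n) - \<lfloor>(real n ^ 2) / 2\<rfloor>"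
proof -
  have le: "n * n div 2 \<le> (2 * n) choose n"
    using card_Bad[of n] card_QQ[of n] card_mono[OF finite_PP Bad_sub[of n]] card_PP[of n]
    by simp
  have fl: "\<lfloor>(real n ^ 2) / 2\<rfloor> = int (n * n div 2)"
  proof -
    have "(real n ^ 2) / 2 = real (n * n) / real (2::nat)" by (simp add: power2_eq_square)
    then show ?thesis using floor_divide_of_nat_eq[of "n * n" 2] by simp
  qed
  show ?thesis using card_AO[of n] le fl by simp
qed


end
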